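(* Let $K\ge3$ and let $X_1,\dots,X_K\in\mathbb{R}^d$ be i.i.d. Gaussian with mean $\bar\mu$ and covariance matrix $\Gamma$. For any permutation $(i_1,\dots,i_K)$ of $(1,\dots,K)$, any integer $k\in\{2,\dots,K-1\}$ and any fixed $\beta\in\mathbb{R}^d$, $$\mathbb{E}\big[X_{i_k}X_{i_k}^\top\mathbb{1}\{X_{i_1}^\top\beta<\dots<X_{i_K}^\top\beta\}\big]\preccurlyeq\mathbb{E}\big[X_{i_1}X_{i_1}^\top\mathbb{1}\{X_{i_1}^\top\beta<\dots<X_{i_K}^\top\beta\}\big]+\mathbb{E}\big[X_{i_K}X_{i_K}^\top\mathbb{1}\{X_{i_1}^\top\beta<\dots<X_{i_K}^\top\beta\}\big].$$
   Context: $\preccurlyeq$ denotes the Loewner (positive semidefinite) order. *)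

theory Defs
  imports "HOL-Probability.Probability"
begin

definition normal_measure :: "real \<Rightarrow> real \<Rightarrow> real measure" where
  "normal_measure m s2 =
     (if s2 = 0 then return borel m else density lborel (normal_density m (sqrt s2)))"

text \<open>Multivariate Gaussian random vector with mean mu and covariance Cov,
  defined via all one-dimensional projections (Cramer--Wold).\<close>
definition gaussian_vec ::
  "'a measure \<Rightarrow> ('a \<Rightarrow> real^'d) \<Rightarrow> real^'d \<Rightarrow> real^'d^'d \<Rightarrow> bool" where
  "gaussian_vec M X mu Cov \<longleftrightarrow>
     X \<in> borel_measurable M \<and>
     (\<forall>v. distr M borel (\<lambda>\<omega>. v \<bullet> X \<omega>) = normal_measure (v \<bullet> mu) (v \<bullet> (Cov *v v)))"

definition outer :: "real^'d \<Rightarrow> real^'d^'d" where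
  "outer x = (\<chi> i j. x $ i * x $ j)"

definition psd_matrix :: "real^'d^'d \<Rightarrow> bool" where
  "psd_matrix A \<longleftrightarrow> transpose A = A \<and> (\<forall>x. 0 \<le> x \<bullet> (A *v x))"

definition loewner_le :: "real^'d^'d \<Rightarrow> real^'d^'d \<Rightarrow> bool" (infix "\<preceq>\<^sub>L" 50) where
  "A \<preceq>\<^sub>L B \<longleftrightarrow> psd_matrix (B - A)"

end

theory Submission
  imports Defs
begin


lemma char_normal_measure:
  assumes "s2 \<ge> 0"
  shows "char (normal_measure m s2) t = iexp (t * m) * complex_of_real (exp (- (s2 * t^2) / 2))"
proof (cases "s2 = 0")
  case True
  then show ?thesis by (simp add: normal_measure_def char_def integral_return)
next
  case False
  define \<sigma> where "\<sigma> = sqrt s2"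
  have sp: "\<sigma> > 0" using assms False by (simp add: \<sigma>_def)
  have s2: "s2 = \<sigma>^2" using assms by (simp add: \<sigma>_def)
  have "char (normal_measure m s2) t = (CLINT x|lborel. normal_density m \<sigma> x *\<^sub>R iexp (t * x))"
    using False unfolding normal_measure_def char_def \<sigma>_def
    by simp (subst integral_density, auto)
  also have "\<dots> = \<bar>\<sigma>\<bar> *\<^sub>R (CLINT x|lborel. normal_density m \<sigma> (m + \<sigma> * x) *\<^sub>R iexp (t * (m + \<sigma> * x)))"
    using sp by (subst lborel_integral_real_affine[where c=\<sigma> and t=m]) auto
  also have "\<dots> = (CLINT x|lborel. iexp (t * m) * (std_normal_density x *\<^sub>R iexp ((t * \<sigma>) * x)))"
  proof -
    have "\<And>x. \<sigma> *\<^sub>R (normal_density m \<sigma> (m + \<sigma> * x) *\<^sub>R iexp (t * (m + \<sigma> * x)))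
       = iexp (t * m) * (std_normal_density x *\<^sub>R iexp ((t * \<sigma>) * x))"
    proof -
      fix x
      have "\<sigma> * normal_density m \<sigma> (m + \<sigma> * x) = std_normal_density x"
        using sp by (simp add: normal_density_def real_sqrt_mult power_mult_distrib field_simps)
      moreover have "iexp (t * (m + \<sigma> * x)) = iexp (t * m) * iexp ((t * \<sigma>) * x)"
        by (simp add: algebra_simps exp_add[symmetric])
      ultimately show "?thesis x"
        by (metis (no_types, lifting) mult.left_commute scaleR_scaleR scaleR_conv_of_real mult_scaleR_right)
    qed
    then show ?thesis using sp by (simp add: integral_scaleR_right[symmetric])
  qed
  also have "\<dots> = iexp (t * m) * (CLINT x|lborel. std_normal_density x *\<^sub>R iexp ((t * \<sigma>) * x))"
    by (rule integral_mult_right_zero)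
  also have "\<dots> = iexp (t * m) * char std_normal_distribution (t * \<sigma>)"
    unfolding char_def by (subst integral_density) auto
  also have "\<dots> = iexp (t * m) * complex_of_real (exp (- (s2 * t^2) / 2))"
    by (simp add: char_std_normal_distribution s2 power_mult_distrib mult.commute)
  finally show ?thesis .
qed



lemma (in prob_space) weighted_levy:
  fixes Z W :: "'a \<Rightarrow> real"
  assumes Z[measurable]: "Z \<in> borel_measurable M" and W[measurable]: "W \<in> borel_measurable M"
    and Wnn: "\<And>\<omega>. 0 \<le> W \<omega>" and Wb: "\<And>\<omega>. W \<omega> \<le> B"
    and ch: "\<And>s. (CLINT \<omega>|M. W \<omega> *\<^sub>R iexp (s * Z \<omega>)) = (LINT \<omega>|M. W \<omega>) *\<^sub>R char (distr M borel Z) s"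
    and A[measurable]: "A \<in> sets borel"
  shows "(LINT \<omega>|M. W \<omega> * indicator A (Z \<omega>)) = (LINT \<omega>|M. W \<omega>) * prob (Z -` A \<inter> space M)"
proof -
  have intW: "integrable M W"
    by (rule integrable_const_bound[where B=B]) (auto intro: order_trans[OF _ Wb] simp: Wnn)
  have intWA: "integrable M (\<lambda>\<omega>. W \<omega> * indicator A (Z \<omega>))"
    by (rule integrable_const_bound[where B=B]) (auto simp: Wnn indicator_def intro: order_trans[OF _ Wb])
  define c where "c = (LINT \<omega>|M. W \<omega>)"
  have c0: "c \<ge> 0" unfolding c_def using Wnn by (simp add: integral_nonneg)
  show ?thesis
  proof (cases "c = 0")
    case True
    then have "AE \<omega> in M. W \<omega> = 0"
      using integral_nonneg_eq_0_iff_AE[OF intW] Wnn unfolding c_def by simp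
    then have "AE \<omega> in M. W \<omega> * indicator A (Z \<omega>) = 0" by auto
    then show ?thesis using True unfolding c_def by (simp add: integral_eq_zero_AE)
  next
    case False
    then have cp: "c > 0" using c0 by simp
    define D where "D = density M (\<lambda>\<omega>. ennreal (W \<omega> / c))"
    have sD: "sets D = sets M" "space D = space M" unfolding D_def by auto
    have "emeasure D (space D) = 1"
    proof -
      have "emeasure D (space D) = (\<integral>\<^sup>+ \<omega>. ennreal (W \<omega> / c) \<partial>M)"
        unfolding D_def by (simp add: emeasure_density nn_integral_set_ennreal[symmetric])
      also have "\<dots> = ennreal (LINT \<omega>|M. W \<omega> / c)"
        using intW Wnn c0 by (intro nn_integral_eq_integral) auto
      also have "\<dots> = 1" using cp by (simp add: c_def)
      finally show ?thesis .
    qed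
    then interpret D: prob_space D by (rule prob_spaceI)
    have Zd[measurable]: "Z \<in> borel_measurable D" using sD by (simp add: measurable_def)
    define N where "N = distr D borel Z"
    have rN: "real_distribution N" unfolding N_def by (rule D.real_distribution_distr) simp
    have rZ: "real_distribution (distr M borel Z)" by simp
    have "char N = char (distr M borel Z)"
    proof
      fix s
      have "char N s = (CLINT \<omega>|D. iexp (s * Z \<omega>))"
        unfolding N_def char_def by (subst integral_distr) auto
      also have "\<dots> = (CLINT \<omega>|M. (W \<omega> / c) *\<^sub>R iexp (s * Z \<omega>))"
        unfolding D_def using Wnn c0 by (subst integral_density) auto
      also have "\<dots> = (1 / c) *\<^sub>R (CLINT \<omega>|M. W \<omega> *\<^sub>R iexp (s * Z \<omega>))"
        by (simp add: divide_inverse integral_scaleR_right[symmetric] mult.commute)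
      also have "\<dots> = char (distr M borel Z) s" using ch[of s] cp by (simp add: c_def)
      finally show "char N s = char (distr M borel Z) s" .
    qed
    then have NZ: "N = distr M borel Z" using Levy_uniqueness[OF rN rZ] by simp
    have "measure N A = (LINT x|N. indicator A x)" by (simp add: N_def)
    also have "\<dots> = (LINT \<omega>|D. indicator A (Z \<omega>))"
      unfolding N_def by (subst integral_distr) auto
    also have "\<dots> = (LINT \<omega>|M. (W \<omega> / c) *\<^sub>R indicator A (Z \<omega>))"
      unfolding D_def using Wnn c0 by (subst integral_density) auto
    also have "\<dots> = (LINT \<omega>|M. W \<omega> * indicator A (Z \<omega>)) / c"
      by (simp add: divide_inverse integral_scaleR_right[symmetric] mult.commute mult.left_commute)
    finally have 1: "measure N A = (LINT \<omega>|M. W \<omega> * indicator A (Z \<omega>)) / c" .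
    have 2: "measure N A = prob (Z -` A \<inter> space M)" unfolding NZ by (simp add: measure_distr)
    show ?thesis using 1 2 cp by (simp add: c_def field_simps)
  qed
qed


lemma cos_iexp: "complex_of_real (cos x) = (iexp x + iexp (- x)) / 2"
  by (simp add: Re_exp Im_exp complex_eq_iff)
lemma sin_iexp: "complex_of_real (sin x) = (iexp x - iexp (- x)) / (2 * \<i>)"
  by (simp add: Re_exp Im_exp complex_eq_iff)
lemma iexp_cos_sin: "iexp x = complex_of_real (cos x) + \<i> * complex_of_real (sin x)"
  by (simp add: Re_exp Im_exp complex_eq_iff)

lemma (in prob_space) integrable_iexp_rv[simp, intro]:
  "f \<in> borel_measurable M \<Longrightarrow> integrable M (\<lambda>\<omega>. iexp (f \<omega>))"
  by (rule integrable_iexp) auto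

lemma (in prob_space) cint_cos:
  assumes [measurable]: "f \<in> borel_measurable M" "g \<in> borel_measurable M" "h \<in> borel_measurable M"
  shows "(CLINT \<omega>|M. iexp (f \<omega>) + (iexp (g \<omega>) + iexp (h \<omega>)) / 2) =
     (CLINT \<omega>|M. iexp (f \<omega>)) + ((CLINT \<omega>|M. iexp (g \<omega>)) + (CLINT \<omega>|M. iexp (h \<omega>))) / 2"
proof -
  have i: "integrable M (\<lambda>\<omega>. iexp (f \<omega>))" "integrable M (\<lambda>\<omega>. iexp (g \<omega>))" "integrable M (\<lambda>\<omega>. iexp (h \<omega>))"
    by auto
  show ?thesis using i by (simp del: of_real_add of_real_mult)
qed

lemma (in prob_space) cint_sin:
  assumes [measurable]: "f \<in> borel_measurable M" "g \<in> borel_measurable M" "h \<in> borel_measurable M"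
  shows "(CLINT \<omega>|M. iexp (f \<omega>) + (iexp (g \<omega>) - iexp (h \<omega>)) / (2 * \<i>)) =
     (CLINT \<omega>|M. iexp (f \<omega>)) + ((CLINT \<omega>|M. iexp (g \<omega>)) - (CLINT \<omega>|M. iexp (h \<omega>))) / (2 * \<i>)"
proof -
  have i: "integrable M (\<lambda>\<omega>. iexp (f \<omega>))" "integrable M (\<lambda>\<omega>. iexp (g \<omega>))" "integrable M (\<lambda>\<omega>. iexp (h \<omega>))"
    by auto
  show ?thesis using i by (simp del: of_real_add of_real_mult)
qed

lemma (in prob_space) cint_cos2:
  assumes [measurable]: "g \<in> borel_measurable M" "h \<in> borel_measurable M"
  shows "(CLINT \<omega>|M. (iexp (g \<omega>) + iexp (h \<omega>)) / 2) =
     ((CLINT \<omega>|M. iexp (g \<omega>)) + (CLINT \<omega>|M. iexp (h \<omega>))) / 2"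
proof -
  have i: "integrable M (\<lambda>\<omega>. iexp (g \<omega>))" "integrable M (\<lambda>\<omega>. iexp (h \<omega>))"
    by auto
  show ?thesis using i by (simp del: of_real_add of_real_mult)
qed

lemma (in prob_space) cint_sin2:
  assumes [measurable]: "g \<in> borel_measurable M" "h \<in> borel_measurable M"
  shows "(CLINT \<omega>|M. (iexp (g \<omega>) - iexp (h \<omega>)) / (2 * \<i>)) =
     ((CLINT \<omega>|M. iexp (g \<omega>)) - (CLINT \<omega>|M. iexp (h \<omega>))) / (2 * \<i>)"
proof -
  have i: "integrable M (\<lambda>\<omega>. iexp (g \<omega>))" "integrable M (\<lambda>\<omega>. iexp (h \<omega>))"
    by auto
  show ?thesis using i by (simp del: of_real_add of_real_mult)
qed

lemma cint_re_im:
  fixes f g :: "'a \<Rightarrow> real"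
  assumes "integrable M f" "integrable M g"
  shows "(CLINT \<omega>|M. complex_of_real (f \<omega>) + \<i> * complex_of_real (g \<omega>)) =
    complex_of_real (LINT \<omega>|M. f \<omega>) + \<i> * complex_of_real (LINT \<omega>|M. g \<omega>)"
proof -
  have a: "integrable M (\<lambda>\<omega>. complex_of_real (f \<omega>))" "integrable M (\<lambda>\<omega>. complex_of_real (g \<omega>))"
    using assms by auto
  have b: "integrable M (\<lambda>\<omega>. \<i> * complex_of_real (g \<omega>))" using a(2) by (rule integrable_mult_right)
  show ?thesis
    by (simp only: Bochner_Integration.integral_add[OF a(1) b] integral_mult_right_zero integral_complex_of_real)
qed

lemma (in prob_space) integrable_bounded_real:
  fixes f :: "'a \<Rightarrow> real"
  shows "f \<in> borel_measurable M \<Longrightarrow> (\<And>\<omega>. \<bar>f \<omega>\<bar> \<le> B) \<Longrightarrow> integrable M f"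
  by (rule integrable_const_bound[where B=B]) auto

lemma (in prob_space) indep_from_char:
  fixes Z Y :: "'a \<Rightarrow> real"
  assumes Z[measurable]: "Z \<in> borel_measurable M" and Y[measurable]: "Y \<in> borel_measurable M"
    and ch2: "\<And>s t. (CLINT \<omega>|M. iexp (s * Z \<omega> + t * Y \<omega>)) = char (distr M borel Z) s * char (distr M borel Y) t"
  shows "indep_var borel Z borel Y"
proof -
  have chZ: "char (distr M borel Z) s = (CLINT \<omega>|M. iexp (s * Z \<omega>))" for s
    unfolding char_def by (subst integral_distr) auto
  have chY: "char (distr M borel Y) s = (CLINT \<omega>|M. iexp (s * Y \<omega>))" for s
    unfolding char_def by (subst integral_distr) auto
  have PA: "(LINT \<omega>|M. indicator A (Z \<omega>)) = prob (Z -` A \<inter> space M)" if "A \<in> sets borel" for A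
  proof -
    have "(LINT \<omega>|M. indicator A (Z \<omega>)) = (LINT \<omega>|M. indicator (Z -` A \<inter> space M) \<omega> :: real)"
      by (rule Bochner_Integration.integral_cong[OF refl]) (auto simp: indicator_def)
    then show ?thesis by simp
  qed
  have cosp: "(LINT \<omega>|M. cos (t * Y \<omega>) * indicator A (Z \<omega>)) = (LINT \<omega>|M. cos (t * Y \<omega>)) * prob (Z -` A \<inter> space M)"
    if A[measurable]: "A \<in> sets borel" for A t
  proof -
    let ?W = "\<lambda>\<omega>. 1 + cos (t * Y \<omega>)"
    have intc: "integrable M (\<lambda>\<omega>. cos (t * Y \<omega>))" by (rule integrable_bounded_real[where B=1]) auto
    have intcA: "integrable M (\<lambda>\<omega>. cos (t * Y \<omega>) * indicator A (Z \<omega>))"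
      by (rule integrable_bounded_real[where B=1]) (auto simp: indicator_def)
    have intA: "integrable M (\<lambda>\<omega>. indicator A (Z \<omega>) :: real)"
      by (rule integrable_bounded_real[where B=1]) (auto simp: indicator_def)
    have cc: "complex_of_real (cos x) = (iexp x + iexp (- x)) / 2" for x
      by (rule cos_iexp)
    have "(CLINT \<omega>|M. ?W \<omega> *\<^sub>R iexp (s * Z \<omega>)) = (LINT \<omega>|M. ?W \<omega>) *\<^sub>R char (distr M borel Z) s" for s
    proof -
      have "(CLINT \<omega>|M. ?W \<omega> *\<^sub>R iexp (s * Z \<omega>)) =
        (CLINT \<omega>|M. iexp (s * Z \<omega>) + (iexp (s * Z \<omega> + t * Y \<omega>) + iexp (s * Z \<omega> + (- t) * Y \<omega>)) / 2)"
        by (intro Bochner_Integration.integral_cong[OF refl]) (auto simp: scaleR_conv_of_real cc algebra_simps exp_add[symmetric])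
      also have "\<dots> = (CLINT \<omega>|M. iexp (s * Z \<omega>)) + ((CLINT \<omega>|M. iexp (s * Z \<omega> + t * Y \<omega>)) + (CLINT \<omega>|M. iexp (s * Z \<omega> + (- t) * Y \<omega>))) / 2"
        by (rule cint_cos) auto
      also have "\<dots> = char (distr M borel Z) s * (1 + (char (distr M borel Y) t + char (distr M borel Y) (- t)) / 2)"
        unfolding ch2 chZ by (simp add: algebra_simps)
      also have "(1 + (char (distr M borel Y) t + char (distr M borel Y) (- t)) / 2) = complex_of_real (LINT \<omega>|M. ?W \<omega>)"
      proof -
        have "complex_of_real (LINT \<omega>|M. ?W \<omega>) = 1 + complex_of_real (LINT \<omega>|M. cos (t * Y \<omega>))"
          using intc by (simp add: prob_space)
        also have "complex_of_real (LINT \<omega>|M. cos (t * Y \<omega>)) = (CLINT \<omega>|M. (iexp (t * Y \<omega>) + iexp (- t * Y \<omega>)) / 2)"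
          by (subst integral_complex_of_real[symmetric]) (simp add: cc)
        also have "\<dots> = (char (distr M borel Y) t + char (distr M borel Y) (- t)) / 2"
          unfolding chY by (rule cint_cos2) auto
        finally show ?thesis by simp
      qed
      finally show ?thesis by (simp add: scaleR_conv_of_real mult.commute)
    qed
    moreover have "\<And>\<omega>. 0 \<le> ?W \<omega>" using cos_ge_minus_one by (smt (verit))
    moreover have "\<And>\<omega>. ?W \<omega> \<le> 2" using cos_le_one by (smt (verit))
    ultimately have "(LINT \<omega>|M. ?W \<omega> * indicator A (Z \<omega>)) = (LINT \<omega>|M. ?W \<omega>) * prob (Z -` A \<inter> space M)"
      using weighted_levy[of Z ?W 2, OF Z _ _ _ _ A] by auto
    moreover have "(LINT \<omega>|M. ?W \<omega> * indicator A (Z \<omega>)) = (LINT \<omega>|M. indicator A (Z \<omega>)) + (LINT \<omega>|M. cos (t * Y \<omega>) * indicator A (Z \<omega>))"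
      using intA intcA by (simp add: distrib_right)
    moreover have "(LINT \<omega>|M. ?W \<omega>) = 1 + (LINT \<omega>|M. cos (t * Y \<omega>))"
      using intc by (simp add: prob_space)
    ultimately show ?thesis using PA[OF A] by (simp add: algebra_simps)
  qed
  have sinp: "(LINT \<omega>|M. sin (t * Y \<omega>) * indicator A (Z \<omega>)) = (LINT \<omega>|M. sin (t * Y \<omega>)) * prob (Z -` A \<inter> space M)"
    if A[measurable]: "A \<in> sets borel" for A t
  proof -
    let ?W = "\<lambda>\<omega>. 1 + sin (t * Y \<omega>)"
    have intc: "integrable M (\<lambda>\<omega>. sin (t * Y \<omega>))" by (rule integrable_bounded_real[where B=1]) auto
    have intcA: "integrable M (\<lambda>\<omega>. sin (t * Y \<omega>) * indicator A (Z \<omega>))"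
      by (rule integrable_bounded_real[where B=1]) (auto simp: indicator_def)
    have intA: "integrable M (\<lambda>\<omega>. indicator A (Z \<omega>) :: real)"
      by (rule integrable_bounded_real[where B=1]) (auto simp: indicator_def)
    have cc: "complex_of_real (sin x) = (iexp x - iexp (- x)) / (2 * \<i>)" for x
      by (rule sin_iexp)
    have "(CLINT \<omega>|M. ?W \<omega> *\<^sub>R iexp (s * Z \<omega>)) = (LINT \<omega>|M. ?W \<omega>) *\<^sub>R char (distr M borel Z) s" for s
    proof -
      have "(CLINT \<omega>|M. ?W \<omega> *\<^sub>R iexp (s * Z \<omega>)) =
        (CLINT \<omega>|M. iexp (s * Z \<omega>) + (iexp (s * Z \<omega> + t * Y \<omega>) - iexp (s * Z \<omega> + (- t) * Y \<omega>)) / (2 * \<i>))"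
        by (intro Bochner_Integration.integral_cong[OF refl]) (auto simp: scaleR_conv_of_real cc algebra_simps exp_add[symmetric])
      also have "\<dots> = (CLINT \<omega>|M. iexp (s * Z \<omega>)) + ((CLINT \<omega>|M. iexp (s * Z \<omega> + t * Y \<omega>)) - (CLINT \<omega>|M. iexp (s * Z \<omega> + (- t) * Y \<omega>))) / (2 * \<i>)"
        by (rule cint_sin) auto
      also have "\<dots> = char (distr M borel Z) s * (1 + (char (distr M borel Y) t - char (distr M borel Y) (- t)) / (2 * \<i>))"
        unfolding ch2 chZ by (simp add: algebra_simps diff_divide_distrib add_divide_distrib)
      also have "(1 + (char (distr M borel Y) t - char (distr M borel Y) (- t)) / (2 * \<i>)) = complex_of_real (LINT \<omega>|M. ?W \<omega>)"
      proof -
        have "complex_of_real (LINT \<omega>|M. ?W \<omega>) = 1 + complex_of_real (LINT \<omega>|M. sin (t * Y \<omega>))"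
          using intc by (simp add: prob_space)
        also have "complex_of_real (LINT \<omega>|M. sin (t * Y \<omega>)) = (CLINT \<omega>|M. (iexp (t * Y \<omega>) - iexp (- t * Y \<omega>)) / (2 * \<i>))"
          by (subst integral_complex_of_real[symmetric]) (simp add: cc)
        also have "\<dots> = (char (distr M borel Y) t - char (distr M borel Y) (- t)) / (2 * \<i>)"
          unfolding chY by (rule cint_sin2) auto
        finally show ?thesis by simp
      qed
      finally show ?thesis by (simp add: scaleR_conv_of_real mult.commute)
    qed
    moreover have "\<And>\<omega>. 0 \<le> ?W \<omega>" using sin_ge_minus_one by (smt (verit))
    moreover have "\<And>\<omega>. ?W \<omega> \<le> 2" using sin_le_one by (smt (verit))
    ultimately have "(LINT \<omega>|M. ?W \<omega> * indicator A (Z \<omega>)) = (LINT \<omega>|M. ?W \<omega>) * prob (Z -` A \<inter> space M)"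
      using weighted_levy[of Z ?W 2, OF Z _ _ _ _ A] by auto
    moreover have "(LINT \<omega>|M. ?W \<omega> * indicator A (Z \<omega>)) = (LINT \<omega>|M. indicator A (Z \<omega>)) + (LINT \<omega>|M. sin (t * Y \<omega>) * indicator A (Z \<omega>))"
      using intA intcA by (simp add: distrib_right)
    moreover have "(LINT \<omega>|M. ?W \<omega>) = 1 + (LINT \<omega>|M. sin (t * Y \<omega>))"
      using intc by (simp add: prob_space)
    ultimately show ?thesis using PA[OF A] by (simp add: algebra_simps)
  qed
  have prodAB: "prob ((\<lambda>\<omega>. (Z \<omega>, Y \<omega>)) -` (A \<times> B) \<inter> space M) = prob (Z -` A \<inter> space M) * prob (Y -` B \<inter> space M)"
    if A[measurable]: "A \<in> sets borel" and B[measurable]: "B \<in> sets borel" for A B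
  proof -
    let ?W = "\<lambda>\<omega>. indicator A (Z \<omega>) :: real"
    have intA: "integrable M ?W"
      by (rule integrable_bounded_real[where B=1]) (auto simp: indicator_def)
    have "(CLINT \<omega>|M. ?W \<omega> *\<^sub>R iexp (s * Y \<omega>)) = (LINT \<omega>|M. ?W \<omega>) *\<^sub>R char (distr M borel Y) s" for s
    proof -
      have "(CLINT \<omega>|M. ?W \<omega> *\<^sub>R iexp (s * Y \<omega>)) =
         (CLINT \<omega>|M. complex_of_real (cos (s * Y \<omega>) * ?W \<omega>) + \<i> * complex_of_real (sin (s * Y \<omega>) * ?W \<omega>))"
        by (intro Bochner_Integration.integral_cong[OF refl]) (simp only: scaleR_conv_of_real iexp_cos_sin, simp add: algebra_simps)
      also have "\<dots> = complex_of_real (LINT \<omega>|M. cos (s * Y \<omega>) * ?W \<omega>) + \<i> * complex_of_real (LINT \<omega>|M. sin (s * Y \<omega>) * ?W \<omega>)"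
      proof -
        have i1: "integrable M (\<lambda>\<omega>. cos (s * Y \<omega>) * ?W \<omega>)"
          by (rule integrable_bounded_real[where B=1]) (auto simp: indicator_def)
        have i2: "integrable M (\<lambda>\<omega>. sin (s * Y \<omega>) * ?W \<omega>)"
          by (rule integrable_bounded_real[where B=1]) (auto simp: indicator_def)
        show ?thesis by (rule cint_re_im[OF i1 i2])
      qed
      also have "\<dots> = prob (Z -` A \<inter> space M) * (complex_of_real (LINT \<omega>|M. cos (s * Y \<omega>)) + \<i> * complex_of_real (LINT \<omega>|M. sin (s * Y \<omega>)))"
        using cosp[OF A, of s] sinp[OF A, of s] by (simp add: algebra_simps)
      also have "complex_of_real (LINT \<omega>|M. cos (s * Y \<omega>)) + \<i> * complex_of_real (LINT \<omega>|M. sin (s * Y \<omega>)) = char (distr M borel Y) s"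
      proof -
        have i1: "integrable M (\<lambda>\<omega>. cos (s * Y \<omega>))" by (rule integrable_bounded_real[where B=1]) auto
        have i2: "integrable M (\<lambda>\<omega>. sin (s * Y \<omega>))" by (rule integrable_bounded_real[where B=1]) auto
        have "complex_of_real (LINT \<omega>|M. cos (s * Y \<omega>)) + \<i> * complex_of_real (LINT \<omega>|M. sin (s * Y \<omega>))
           = (CLINT \<omega>|M. complex_of_real (cos (s * Y \<omega>)) + \<i> * complex_of_real (sin (s * Y \<omega>)))"
          by (rule cint_re_im[OF i1 i2, symmetric])
        also have "\<dots> = (CLINT \<omega>|M. iexp (s * Y \<omega>))"
          by (intro Bochner_Integration.integral_cong[OF refl]) (simp only: iexp_cos_sin)
        finally show ?thesis unfolding chY .
      qed
      finally show ?thesis using PA[OF A] by (simp add: scaleR_conv_of_real)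
    qed
    from weighted_levy[of Y ?W 1, OF Y _ _ _ this B]
    have "(LINT \<omega>|M. ?W \<omega> * indicator B (Y \<omega>)) = (LINT \<omega>|M. ?W \<omega>) * prob (Y -` B \<inter> space M)"
      by (auto simp: indicator_def)
    moreover have "(LINT \<omega>|M. ?W \<omega> * indicator B (Y \<omega>)) = prob ((\<lambda>\<omega>. (Z \<omega>, Y \<omega>)) -` (A \<times> B) \<inter> space M)"
    proof -
      have "(LINT \<omega>|M. ?W \<omega> * indicator B (Y \<omega>)) = (LINT \<omega>|M. indicator ((\<lambda>\<omega>. (Z \<omega>, Y \<omega>)) -` (A \<times> B) \<inter> space M) \<omega>)"
        by (rule Bochner_Integration.integral_cong[OF refl]) (auto simp: indicator_def)
      then show ?thesis by simp
    qed
    ultimately show ?thesis using PA[OF A] by simp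
  qed
  show ?thesis
    unfolding indep_var_distribution_eq
  proof (intro conjI)
    show "distr M borel Z \<Otimes>\<^sub>M distr M borel Y = distr M (borel \<Otimes>\<^sub>M borel) (\<lambda>x. (Z x, Y x))"
    proof (rule pair_measure_eqI)
      show "sigma_finite_measure (distr M borel Z)" "sigma_finite_measure (distr M borel Y)"
        by (auto intro!: prob_space_imp_sigma_finite prob_space_distr)
      show "sets (distr M borel Z \<Otimes>\<^sub>M distr M borel Y) = sets (distr M (borel \<Otimes>\<^sub>M borel) (\<lambda>x. (Z x, Y x)))"
        by simp
      fix A B assume A: "A \<in> sets (distr M borel Z)" and B: "B \<in> sets (distr M borel Y)"
      then have A': "A \<in> sets borel" and B': "B \<in> sets borel" by auto
      have "emeasure (distr M borel Z) A * emeasure (distr M borel Y) B =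
        ennreal (prob (Z -` A \<inter> space M) * prob (Y -` B \<inter> space M))"
        using A' B' by (simp add: emeasure_distr emeasure_eq_measure ennreal_mult)
      also have "\<dots> = emeasure (distr M (borel \<Otimes>\<^sub>M borel) (\<lambda>x. (Z x, Y x))) (A \<times> B)"
        using A' B' by (simp add: emeasure_distr emeasure_eq_measure prodAB)
      finally show "emeasure (distr M borel Z) A * emeasure (distr M borel Y) B = emeasure (distr M (borel \<Otimes>\<^sub>M borel) (\<lambda>x. (Z x, Y x))) (A \<times> B)" .
    qed
  qed auto
qed



lemma sym_form:
  fixes A :: "real^'n^'n"
  assumes "transpose A = A"
  shows "x \<bullet> (A *v y) = y \<bullet> (A *v x)"
proof -
  have "x \<bullet> (A *v y) = (\<Sum>i\<in>UNIV. \<Sum>j\<in>UNIV. x$i * A$i$j * y$j)"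
    by (simp add: inner_vec_def matrix_vector_mult_def sum_distrib_left mult.assoc)
  also have "\<dots> = (\<Sum>j\<in>UNIV. \<Sum>i\<in>UNIV. x$i * A$i$j * y$j)" by (rule sum.swap)
  also have "\<dots> = y \<bullet> (A *v x)"
  proof -
    have "A$i$j = A$j$i" for i j using assms by (metis transpose_def vec_lambda_beta)
    then show ?thesis
      by (simp add: inner_vec_def matrix_vector_mult_def sum_distrib_left mult.assoc mult.commute mult.left_commute)
  qed
  finally show ?thesis .
qed

lemma integrable_return_borel:
  fixes g :: "real \<Rightarrow> real"
  shows "g \<in> borel_measurable borel \<Longrightarrow> integrable (return borel m) g"
  by (simp add: integrable_iff_bounded nn_integral_return)

lemma normal_measure_moments:
  assumes "s2 \<ge> 0"
  shows "integrable (normal_measure m s2) (\<lambda>x. x)" "integrable (normal_measure m s2) (\<lambda>x. x^2)"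
    "(LINT x|normal_measure m s2. x) = m" "(LINT x|normal_measure m s2. x^2) = s2 + m^2"
proof -
  have all: "integrable (normal_measure m s2) (\<lambda>x. x) \<and> integrable (normal_measure m s2) (\<lambda>x. x^2) \<and>
    (LINT x|normal_measure m s2. x) = m \<and> (LINT x|normal_measure m s2. x^2) = s2 + m^2"
  proof (cases "s2 = 0")
    case True
    then show ?thesis by (simp add: normal_measure_def integrable_return_borel integral_return)
  next
    case False
    define \<sigma> where "\<sigma> = sqrt s2"
    have sp: "\<sigma> > 0" using assms False by (simp add: \<sigma>_def)
    have s2: "s2 = \<sigma>^2" using assms by (simp add: \<sigma>_def)
    have NM: "normal_measure m s2 = density lborel (normal_density m \<sigma>)"
      using False by (simp add: normal_measure_def \<sigma>_def)
    have h1: "has_bochner_integral lborel (\<lambda>x. normal_density m \<sigma> x * x) m"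
      using normal_moment_nz_1[OF sp] .
    have h0: "has_bochner_integral lborel (\<lambda>x. normal_density m \<sigma> x) 1"
      using has_bochner_integral_integrable[of lborel "normal_density m \<sigma>"] integral_normal_density[OF sp]
      by (metis has_bochner_integral_integral_eq integrable.simps integrable_normal_density[OF sp])
    have h2': "has_bochner_integral lborel (\<lambda>x. normal_density m \<sigma> x * (x - m)^2) (\<sigma>^2)"
      using normal_moment_even[OF sp, of m 1] by (simp add: power2_eq_square)
    have hh: "has_bochner_integral lborel (\<lambda>x. normal_density m \<sigma> x * (x - m)^2 + 2 * m * (normal_density m \<sigma> x * x) - m^2 * normal_density m \<sigma> x)
       (\<sigma>^2 + 2 * m * m - m^2 * 1)"
      by (intro has_bochner_integral_diff has_bochner_integral_add has_bochner_integral_mult_right h0 h1 h2')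
    have eq: "(\<lambda>x. normal_density m \<sigma> x * (x - m)^2 + 2 * m * (normal_density m \<sigma> x * x) - m^2 * normal_density m \<sigma> x)
        = (\<lambda>x. normal_density m \<sigma> x * x^2)"
      by (rule ext) (simp add: power2_eq_square algebra_simps)
    have v: "\<sigma>^2 + 2 * m * m - m^2 * 1 = s2 + m^2" by (simp add: s2 power2_eq_square)
    have h2: "has_bochner_integral lborel (\<lambda>x. normal_density m \<sigma> x * x^2) (s2 + m^2)"
      using hh unfolding eq v .
    show ?thesis unfolding NM
      using h1 h2
      by (auto simp: integrable_density integral_density has_bochner_integral_iff)
  qed
  then show "integrable (normal_measure m s2) (\<lambda>x. x)" "integrable (normal_measure m s2) (\<lambda>x. x^2)"
    "(LINT x|normal_measure m s2. x) = m" "(LINT x|normal_measure m s2. x^2) = s2 + m^2" by auto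
qed

lemma (in prob_space) normal_rv_moments:
  fixes f :: "'a \<Rightarrow> real"
  assumes [measurable]: "f \<in> borel_measurable M" and d: "distr M borel f = normal_measure m s2" and "s2 \<ge> 0"
  shows "integrable M f" "integrable M (\<lambda>\<omega>. (f \<omega>)^2)" "expectation f = m" "expectation (\<lambda>\<omega>. (f \<omega>)^2) = s2 + m^2"
proof -
  note nm = normal_measure_moments[OF \<open>s2 \<ge> 0\<close>, of m, folded d]
  show "integrable M f" using nm(1) by (subst (asm) integrable_distr_eq) auto
  show "integrable M (\<lambda>\<omega>. (f \<omega>)^2)" using nm(2) by (subst (asm) integrable_distr_eq) auto
  show "expectation f = m" using nm(3) by (subst (asm) integral_distr) auto
  show "expectation (\<lambda>\<omega>. (f \<omega>)^2) = s2 + m^2" using nm(4) by (subst (asm) integral_distr) auto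
qed



lemma psd_cross_zero:
  fixes C :: "real^'n^'n"
  assumes psd: "psd_matrix C" and z: "b \<bullet> (C *v b) = 0"
  shows "v \<bullet> (C *v b) = 0"
proof (rule ccontr)
  assume nz: "v \<bullet> (C *v b) \<noteq> 0"
  have sym: "transpose C = C" using psd by (simp add: psd_matrix_def)
  have q: "(v + r *\<^sub>R b) \<bullet> (C *v (v + r *\<^sub>R b)) = v \<bullet> (C *v v) + 2 * r * (v \<bullet> (C *v b))" for r
    using z sym_form[OF sym, of b v]
    by (simp add: matrix_vector_right_distrib matrix_vector_mult_scaleR inner_add_left inner_add_right algebra_simps)
  define r where "r = - (v \<bullet> (C *v v) + 1) / (2 * (v \<bullet> (C *v b)))"
  have "0 \<le> (v + r *\<^sub>R b) \<bullet> (C *v (v + r *\<^sub>R b))" using psd by (simp add: psd_matrix_def)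
  also have "\<dots> = -1" unfolding q r_def using nz by (simp add: field_simps)
  finally show False by simp
qed

lemma (in prob_space) gauss_indep:
  fixes X :: "'a \<Rightarrow> real^'d"
  assumes g: "gaussian_vec M X mu Cov" and psd: "psd_matrix Cov"
    and cross: "w \<bullet> (Cov *v b) = 0"
  shows "indep_var borel (\<lambda>\<omega>. w \<bullet> X \<omega>) borel (\<lambda>\<omega>. b \<bullet> X \<omega>)"
proof -
  have mX[measurable]: "X \<in> borel_measurable M" using g by (simp add: gaussian_vec_def)
  have du: "distr M borel (\<lambda>\<omega>. u \<bullet> X \<omega>) = normal_measure (u \<bullet> mu) (u \<bullet> (Cov *v u))" for u
    using g by (simp add: gaussian_vec_def)
  have nn: "0 \<le> u \<bullet> (Cov *v u)" for u using psd by (simp add: psd_matrix_def)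
  have sym: "transpose Cov = Cov" using psd by (simp add: psd_matrix_def)
  have cross': "b \<bullet> (Cov *v w) = 0" using cross sym_form[OF sym, of w b] by simp
  have chu: "char (distr M borel (\<lambda>\<omega>. u \<bullet> X \<omega>)) s = iexp (s * (u \<bullet> mu)) * complex_of_real (exp (- ((u \<bullet> (Cov *v u)) * s^2) / 2))" for u s
    unfolding du by (rule char_normal_measure[OF nn])
  show ?thesis
  proof (rule indep_from_char)
    fix s t :: real
    define u where "u = s *\<^sub>R w + t *\<^sub>R b"
    have "(CLINT \<omega>|M. iexp (s * (w \<bullet> X \<omega>) + t * (b \<bullet> X \<omega>))) = (CLINT \<omega>|M. iexp (1 * (u \<bullet> X \<omega>)))"
      by (simp add: u_def inner_add_left)
    also have "\<dots> = char (distr M borel (\<lambda>\<omega>. u \<bullet> X \<omega>)) 1"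
      unfolding char_def by (subst integral_distr) auto
    also have "\<dots> = iexp (u \<bullet> mu) * complex_of_real (exp (- (u \<bullet> (Cov *v u)) / 2))"
      by (simp add: chu)
    also have "u \<bullet> (Cov *v u) = s^2 * (w \<bullet> (Cov *v w)) + t^2 * (b \<bullet> (Cov *v b))"
      unfolding u_def using cross cross'
      by (simp add: matrix_vector_right_distrib matrix_vector_mult_scaleR inner_add_left inner_add_right power2_eq_square algebra_simps)
    also have "iexp (u \<bullet> mu) * complex_of_real (exp (- (s^2 * (w \<bullet> (Cov *v w)) + t^2 * (b \<bullet> (Cov *v b))) / 2))
      = (iexp (s * (w \<bullet> mu)) * complex_of_real (exp (- ((w \<bullet> (Cov *v w)) * s^2) / 2))) *
        (iexp (t * (b \<bullet> mu)) * complex_of_real (exp (- ((b \<bullet> (Cov *v b)) * t^2) / 2)))"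
    proof -
      have e1: "iexp (u \<bullet> mu) = iexp (s * (w \<bullet> mu)) * iexp (t * (b \<bullet> mu))"
        by (simp add: u_def inner_add_left exp_add[symmetric] algebra_simps)
      have e2: "exp (- (s^2 * (w \<bullet> (Cov *v w)) + t^2 * (b \<bullet> (Cov *v b))) / 2) =
          exp (- ((w \<bullet> (Cov *v w)) * s^2) / 2) * exp (- ((b \<bullet> (Cov *v b)) * t^2) / 2)"
        by (simp add: exp_add[symmetric] algebra_simps add_divide_distrib diff_divide_distrib)
      show ?thesis unfolding e1 e2 by (simp add: algebra_simps)
    qed
    finally show "(CLINT \<omega>|M. iexp (s * (w \<bullet> X \<omega>) + t * (b \<bullet> X \<omega>))) =
      char (distr M borel (\<lambda>\<omega>. w \<bullet> X \<omega>)) s * char (distr M borel (\<lambda>\<omega>. b \<bullet> X \<omega>)) t"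
      by (simp add: chu)
  qed auto
qed


lemma (in prob_space) gauss_cond:
  fixes X :: "'a \<Rightarrow> real^'d"
  assumes g: "gaussian_vec M X mu Cov" and psd: "psd_matrix Cov"
    and cdef: "c = (v \<bullet> (Cov *v b)) / (b \<bullet> (Cov *v b))"
    and wdef: "w = v - c *\<^sub>R b"
    and B[measurable]: "B \<in> sets borel"
  shows "(\<integral>\<^sup>+\<omega>. ennreal ((v \<bullet> X \<omega>)^2 * indicator B (b \<bullet> X \<omega>)) \<partial>M) =
         (\<integral>\<^sup>+\<omega>. ennreal (((c * (b \<bullet> X \<omega>) + w \<bullet> mu)^2 + w \<bullet> (Cov *v w)) * indicator B (b \<bullet> X \<omega>)) \<partial>M)"
proof -
  have mX[measurable]: "X \<in> borel_measurable M" using g by (simp add: gaussian_vec_def)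
  have du: "distr M borel (\<lambda>\<omega>. u \<bullet> X \<omega>) = normal_measure (u \<bullet> mu) (u \<bullet> (Cov *v u))" for u
    using g by (simp add: gaussian_vec_def)
  have nn: "0 \<le> u \<bullet> (Cov *v u)" for u using psd by (simp add: psd_matrix_def)
  note mom = normal_rv_moments[OF _ du nn]
  have cross: "w \<bullet> (Cov *v b) = 0"
  proof (cases "b \<bullet> (Cov *v b) = 0")
    case True
    then have "v \<bullet> (Cov *v b) = 0" by (rule psd_cross_zero[OF psd])
    then show ?thesis using True by (simp add: wdef inner_diff_left)
  next
    case False
    then show ?thesis by (simp add: wdef cdef inner_diff_left)
  qed
  define Y where "Y = (\<lambda>\<omega>. b \<bullet> X \<omega>)"
  define W where "W = (\<lambda>\<omega>. w \<bullet> X \<omega>)"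
  define m where "m = w \<bullet> mu"
  define s where "s = w \<bullet> (Cov *v w)"
  have [measurable]: "Y \<in> borel_measurable M" "W \<in> borel_measurable M" by (auto simp: Y_def W_def)
  have ind: "indep_var borel W borel Y" unfolding W_def Y_def by (rule gauss_indep[OF g psd cross])
  have vX: "v \<bullet> X \<omega> = c * Y \<omega> + W \<omega>" for \<omega>
    by (simp add: wdef Y_def W_def inner_diff_left)
  have iY: "integrable M Y" "integrable M (\<lambda>\<omega>. (Y \<omega>)^2)" using mom[of b] by (auto simp: Y_def)
  have iW: "integrable M W" "integrable M (\<lambda>\<omega>. (W \<omega>)^2)" "expectation W = m" "expectation (\<lambda>\<omega>. (W \<omega>)^2) = s + m^2"
    using mom[of w] by (auto simp: W_def m_def s_def)
  let ?I = "\<lambda>\<omega>. indicator B (Y \<omega>) :: real"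
  let ?a = "\<lambda>\<omega>. c * Y \<omega> + m"
  have iI: "integrable M ?I" by (rule integrable_bounded_real[where B=1]) (auto simp: indicator_def)
  have ia: "integrable M ?a" using iY by auto
  have ia2: "integrable M (\<lambda>\<omega>. (?a \<omega>)^2)"
    using iY by (simp add: power2_eq_square algebra_simps)
  have iaI: "integrable M (\<lambda>\<omega>. ?a \<omega> * ?I \<omega>)"
    by (rule Bochner_Integration.integrable_bound[OF ia]) (auto simp: indicator_def)
  have ia2I: "integrable M (\<lambda>\<omega>. (?a \<omega>)^2 * ?I \<omega>)"
    by (rule Bochner_Integration.integrable_bound[OF ia2]) (auto simp: indicator_def)
  have iZ: "integrable M (\<lambda>\<omega>. W \<omega> - m)" using iW by auto
  have EZ: "expectation (\<lambda>\<omega>. W \<omega> - m) = 0" using iW by (simp add: prob_space)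
  have iZ2: "integrable M (\<lambda>\<omega>. (W \<omega> - m)^2)"
    using iW by (simp add: power2_eq_square algebra_simps)
  have EZ2: "expectation (\<lambda>\<omega>. (W \<omega> - m)^2) = s"
  proof -
    have "expectation (\<lambda>\<omega>. (W \<omega> - m)^2) = expectation (\<lambda>\<omega>. (W \<omega>)^2 - 2 * m * W \<omega> + m^2)"
      by (simp add: power2_eq_square algebra_simps)
    also have "\<dots> = (s + m^2) - 2 * m * m + m^2" using iW by (simp add: prob_space)
    finally show ?thesis by (simp add: power2_eq_square)
  qed
  have ind1: "indep_var borel (\<lambda>\<omega>. W \<omega> - m) borel (\<lambda>\<omega>. ?a \<omega> * ?I \<omega>)"
  proof -
    have "indep_var borel ((\<lambda>x. x - m) \<circ> W) borel ((\<lambda>y. (c * y + m) * indicator B y) \<circ> Y)"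
      by (rule indep_var_compose[OF ind]) auto
    then show ?thesis by (simp add: comp_def)
  qed
  have ind2: "indep_var borel (\<lambda>\<omega>. (W \<omega> - m)^2) borel ?I"
  proof -
    have "indep_var borel ((\<lambda>x. (x - m)^2) \<circ> W) borel ((\<lambda>y. indicator B y :: real) \<circ> Y)"
      by (rule indep_var_compose[OF ind]) auto
    then show ?thesis by (simp add: comp_def)
  qed
  have E1: "expectation (\<lambda>\<omega>. (W \<omega> - m) * (?a \<omega> * ?I \<omega>)) = 0"
    using indep_var_lebesgue_integral[OF ind1 iZ iaI] EZ by simp
  have int1: "integrable M (\<lambda>\<omega>. (W \<omega> - m) * (?a \<omega> * ?I \<omega>))"
    using indep_var_integrable[OF ind1 iZ iaI] .
  have E2: "expectation (\<lambda>\<omega>. (W \<omega> - m)^2 * ?I \<omega>) = s * expectation ?I"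
    using indep_var_lebesgue_integral[OF ind2 iZ2 iI] EZ2 by simp
  have int2: "integrable M (\<lambda>\<omega>. (W \<omega> - m)^2 * ?I \<omega>)"
    using indep_var_integrable[OF ind2 iZ2 iI] .
  have decomp: "(v \<bullet> X \<omega>)^2 * indicator B (b \<bullet> X \<omega>) =
      (?a \<omega>)^2 * ?I \<omega> + 2 * ((W \<omega> - m) * (?a \<omega> * ?I \<omega>)) + (W \<omega> - m)^2 * ?I \<omega>" for \<omega>
    unfolding vX by (simp add: Y_def power2_eq_square algebra_simps)
  have rhs: "((c * (b \<bullet> X \<omega>) + w \<bullet> mu)^2 + w \<bullet> (Cov *v w)) * indicator B (b \<bullet> X \<omega>) =
      (?a \<omega>)^2 * ?I \<omega> + s * ?I \<omega>" for \<omega>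
    by (simp add: Y_def m_def s_def algebra_simps)
  have intL: "integrable M (\<lambda>\<omega>. (v \<bullet> X \<omega>)^2 * indicator B (b \<bullet> X \<omega>))"
    unfolding decomp using ia2I int1 int2 by auto
  have intR: "integrable M (\<lambda>\<omega>. ((c * (b \<bullet> X \<omega>) + w \<bullet> mu)^2 + w \<bullet> (Cov *v w)) * indicator B (b \<bullet> X \<omega>))"
    unfolding rhs using ia2I iI by auto
  have "expectation (\<lambda>\<omega>. (v \<bullet> X \<omega>)^2 * indicator B (b \<bullet> X \<omega>)) =
        expectation (\<lambda>\<omega>. (?a \<omega>)^2 * ?I \<omega>) + 2 * expectation (\<lambda>\<omega>. (W \<omega> - m) * (?a \<omega> * ?I \<omega>)) + expectation (\<lambda>\<omega>. (W \<omega> - m)^2 * ?I \<omega>)"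
    unfolding decomp using ia2I int1 int2 by simp
  also have "\<dots> = expectation (\<lambda>\<omega>. (?a \<omega>)^2 * ?I \<omega>) + s * expectation ?I"
    using E1 E2 by simp
  also have "\<dots> = expectation (\<lambda>\<omega>. ((c * (b \<bullet> X \<omega>) + w \<bullet> mu)^2 + w \<bullet> (Cov *v w)) * indicator B (b \<bullet> X \<omega>))"
    unfolding rhs using ia2I iI by simp
  finally have eq: "expectation (\<lambda>\<omega>. (v \<bullet> X \<omega>)^2 * indicator B (b \<bullet> X \<omega>)) =
     expectation (\<lambda>\<omega>. ((c * (b \<bullet> X \<omega>) + w \<bullet> mu)^2 + w \<bullet> (Cov *v w)) * indicator B (b \<bullet> X \<omega>))" .
  have s0: "0 \<le> w \<bullet> (Cov *v w)" by (rule nn)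
  show ?thesis
    using nn_integral_eq_integral[OF intL] nn_integral_eq_integral[OF intR] eq s0
    by (simp add: indicator_def)
qed



lemma (in prob_space) swap_cond:
  fixes X :: "nat \<Rightarrow> 'a \<Rightarrow> real^'d"
  assumes I: "finite I" "i0 \<in> I"
    and indep: "indep_vars (\<lambda>_. borel) X I"
    and gv: "\<And>i. i \<in> I \<Longrightarrow> gaussian_vec M (X i) mu Cov" and psd: "psd_matrix Cov"
    and Pm: "Measurable.pred (PiM I (\<lambda>_. borel)) P"
    and sect: "\<And>x. \<exists>B\<in>sets borel. \<forall>y. P (x(i0 := y)) = (b \<bullet> y \<in> B)"
    and cdef: "c = (v \<bullet> (Cov *v b)) / (b \<bullet> (Cov *v b))"
    and wdef: "w = v - c *\<^sub>R b"
  shows "(\<integral>\<^sup>+\<omega>. ennreal ((v \<bullet> X i0 \<omega>)^2 * indicator {x. P x} (\<lambda>i\<in>I. X i \<omega>)) \<partial>M) =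
         (\<integral>\<^sup>+\<omega>. ennreal (((c * (b \<bullet> X i0 \<omega>) + w \<bullet> mu)^2 + w \<bullet> (Cov *v w)) * indicator {x. P x} (\<lambda>i\<in>I. X i \<omega>)) \<partial>M)"
proof -
  define X' where "X' i = (if i \<in> I then X i else (\<lambda>_. 0))" for i
  have rv: "X i \<in> borel_measurable M" if "i \<in> I" for i
    using indep that unfolding indep_vars_def2 by auto
  have rv'[measurable]: "X' i \<in> borel_measurable M" for i
    using rv by (auto simp: X'_def)
  define L where "L i = distr M borel (X' i)" for i
  have psL: "prob_space (L i)" for i unfolding L_def by (rule prob_space_distr) simp
  have sfL: "product_sigma_finite L"
    unfolding product_sigma_finite_def using psL by (auto intro: prob_space_imp_sigma_finite)
  interpret PS: product_sigma_finite L by (rule sfL)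
  have indep': "indep_vars (\<lambda>_. borel) X' I"
    using indep by (rule indep_vars_cong[THEN iffD1, rotated -1]) (auto simp: X'_def)
  have dist: "distr M (PiM I (\<lambda>_. borel)) (\<lambda>\<omega>. \<lambda>i\<in>I. X' i \<omega>) = PiM I L"
    using indep_vars_iff_distr_eq_PiM[where I=I and M'="\<lambda>_. borel" and X=X', THEN iffD1, OF _ _ indep'] I
    unfolding L_def by auto
  have rX: "(\<lambda>i\<in>I. X' i \<omega>) = (\<lambda>i\<in>I. X i \<omega>)" for \<omega>
    by (auto simp: X'_def restrict_def)
  have sPL: "sets (PiM I L) = sets (PiM I (\<lambda>_. borel))"
    by (rule sets_PiM_cong) (auto simp: L_def)
  have Pm': "Measurable.pred (PiM I L) P"
    using Pm by (simp add: measurable_cong_sets[OF sPL refl])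
  have I': "I = insert i0 (I - {i0})" using I by auto
  have key: "(\<integral>\<^sup>+\<omega>. ennreal (h (X i0 \<omega>) * indicator {x. P x} (\<lambda>i\<in>I. X i \<omega>)) \<partial>M) =
      (\<integral>\<^sup>+ x. (\<integral>\<^sup>+ y. ennreal (h y * indicator {x. P x} (x(i0 := y))) \<partial>(L i0)) \<partial>(PiM (I - {i0}) L))"
    if hm[measurable]: "h \<in> borel_measurable borel" for h :: "real^'d \<Rightarrow> real"
  proof -
    have Pm''[measurable]: "Measurable.pred (PiM I L) P" by (rule Pm')
    have "(\<integral>\<^sup>+\<omega>. ennreal (h (X i0 \<omega>) * indicator {x. P x} (\<lambda>i\<in>I. X i \<omega>)) \<partial>M) =
        (\<integral>\<^sup>+\<omega>. ennreal (h ((\<lambda>i\<in>I. X' i \<omega>) i0) * indicator {x. P x} (\<lambda>i\<in>I. X' i \<omega>)) \<partial>M)"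
      using I by (simp only: rX) simp
    also have "\<dots> = (\<integral>\<^sup>+ x. ennreal (h (x i0) * indicator {x. P x} x) \<partial>(distr M (PiM I (\<lambda>_. borel)) (\<lambda>\<omega>. \<lambda>i\<in>I. X' i \<omega>)))"
      using I Pm by (subst nn_integral_distr) auto
    also have "\<dots> = (\<integral>\<^sup>+ x. ennreal (h (x i0) * indicator {x. P x} x) \<partial>(PiM I L))"
      unfolding dist ..
    also have "\<dots> = (\<integral>\<^sup>+ x. (\<integral>\<^sup>+ y. ennreal (h ((x(i0 := y)) i0) * indicator {x. P x} (x(i0 := y))) \<partial>(L i0)) \<partial>(PiM (I - {i0}) L))"
    proof -
      have i0[simp]: "i0 \<in> I" by (rule I(2))
      have sL[simp]: "sets (L i) = sets borel" for i by (simp add: L_def)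
      have c1[measurable]: "(\<lambda>x. x i0) \<in> borel_measurable (PiM I L)"
        using measurable_component_singleton[OF i0, of L] by (simp add: measurable_cong_sets[OF refl sL])
      have ie: "(\<lambda>x. indicator {x. P x} x :: real) = (\<lambda>x. if P x then 1 else 0)"
        by (auto simp: indicator_def)
      have c2[measurable]: "(\<lambda>x. indicator {x. P x} x :: real) \<in> borel_measurable (PiM I L)"
        unfolding ie by (intro measurable_If Pm') auto
      have fm: "(\<lambda>x. ennreal (h (x i0) * indicator {x. P x} x)) \<in> borel_measurable (PiM I L)"
        by measurable
      have eqI: "PiM I L = PiM (insert i0 (I - {i0})) L" using I' by simp
      show ?thesis unfolding eqI
        by (rule PS.product_nn_integral_insert) (use I fm eqI in auto)
    qed
    finally show ?thesis by simp
  qed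
  show ?thesis
  proof -
    have m1: "(\<lambda>y. (v \<bullet> y)^2) \<in> borel_measurable borel" by measurable
    have m2: "(\<lambda>y. (c * (b \<bullet> y) + w \<bullet> mu)^2 + w \<bullet> (Cov *v w)) \<in> borel_measurable borel" by measurable
    show ?thesis
      unfolding key[OF m1] key[OF m2]
    proof (rule nn_integral_cong)
      fix x
      obtain B where B[measurable]: "B \<in> sets borel" and PB: "\<And>y. P (x(i0 := y)) = (b \<bullet> y \<in> B)"
        using sect[of x] by blast
      have ind: "indicator {x. P x} (x(i0 := y)) = (indicator B (b \<bullet> y) :: real)" for y
        using PB[of y] by (simp add: indicator_def)
      have L0: "L i0 = distr M borel (X i0)" using I by (simp add: L_def X'_def)
      show "(\<integral>\<^sup>+ y. ennreal ((v \<bullet> y)^2 * indicator {x. P x} (x(i0 := y))) \<partial>L i0) =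
            (\<integral>\<^sup>+ y. ennreal (((c * (b \<bullet> y) + w \<bullet> mu)^2 + w \<bullet> (Cov *v w)) * indicator {x. P x} (x(i0 := y))) \<partial>L i0)"
        unfolding ind L0 using rv[OF I(2)]
        apply (subst (1 2) nn_integral_distr)
        apply (auto)[4]
        by (rule gauss_cond[OF gv[OF I(2)] psd cdef wdef B])
    qed
  qed
qed



lemma int_entry:
  fixes f :: "'a \<Rightarrow> real^'n^'m"
  assumes "integrable M f"
  shows "(integral\<^sup>L M f) $ i $ j = (LINT \<omega>|M. f \<omega> $ i $ j)"
proof -
  have bl: "bounded_linear (\<lambda>A::real^'n^'m. A $ i $ j)"
    by (rule bounded_linear_compose[of "\<lambda>v. v $ j" "\<lambda>A. A $ i"]) (rule bounded_linear_vec_nth)+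
  show ?thesis using integral_bounded_linear[OF bl assms] by simp
qed

lemma outer_expand:
  fixes y :: "real^'d"
  shows "outer y = (\<Sum>i\<in>UNIV. \<Sum>j\<in>UNIV. (y$i * y$j) *\<^sub>R axis i (axis j (1::real)))"
proof -
  have "(\<Sum>i\<in>UNIV. \<Sum>j\<in>UNIV. (y$i * y$j) *\<^sub>R axis i (axis j (1::real))) $ a $ b = y$a * y$b" for a b
  proof -
    have "(\<Sum>i\<in>UNIV. \<Sum>j\<in>UNIV. (y$i * y$j) *\<^sub>R axis i (axis j (1::real))) $ a $ b
       = (\<Sum>i\<in>UNIV. \<Sum>j\<in>UNIV. (y$i * y$j) * ((axis i (axis j (1::real))) $ a $ b))"
      by (simp add: sum_component)
    also have "\<dots> = (\<Sum>i\<in>UNIV. \<Sum>j\<in>UNIV. (if i = a \<and> j = b then y$i * y$j else 0))"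
      by (intro sum.cong refl) (auto simp: axis_def)
    also have "\<dots> = (\<Sum>i\<in>UNIV. if i = a then (\<Sum>j\<in>UNIV. if j = b then y$i * y$j else 0) else 0)"
      by (intro sum.cong refl) auto
    also have "\<dots> = y$a * y$b"
      by simp
    finally show ?thesis .
  qed
  then show ?thesis by (simp add: outer_def vec_eq_iff)
qed

lemma quad_outer:
  fixes x y :: "real^'d"
  shows "x \<bullet> (outer y *v x) = (x \<bullet> y)^2"
  by (simp add: outer_def inner_vec_def matrix_vector_mult_def power2_eq_square sum_distrib_left sum_distrib_right
      algebra_simps)

lemma quad_bl:
  fixes x :: "real^'d"
  shows "bounded_linear (\<lambda>A::real^'d^'d. x \<bullet> (A *v x))"
  unfolding linear_conv_bounded_linear[symmetric]
  by (intro linearI)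
    (simp_all add: matrix_vector_mult_def inner_vec_def sum_distrib_left sum.distrib algebra_simps)

lemma abs_prod_sq: fixes a b :: real shows "\<bar>a * b\<bar> \<le> a^2 + b^2"
proof -
  have "0 \<le> (\<bar>a\<bar> - \<bar>b\<bar>)^2" by simp
  then have "2 * (\<bar>a\<bar> * \<bar>b\<bar>) \<le> \<bar>a\<bar>^2 + \<bar>b\<bar>^2" by (simp add: power2_diff)
  moreover have "0 \<le> \<bar>a\<bar> * \<bar>b\<bar>" by simp
  moreover have "\<bar>a\<bar>^2 = a^2" "\<bar>b\<bar>^2 = b^2" by simp_all
  ultimately have "\<bar>a\<bar> * \<bar>b\<bar> \<le> a^2 + b^2" by linarith
  then show ?thesis by (simp add: abs_mult)
qed

lemma tr_adddiff:
  fixes A B C :: "real^'n^'n"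
  shows "transpose (A + B - C) = transpose A + transpose B - transpose C"
  by (simp add: vec_eq_iff transpose_def)

lemma sq_between:
  fixes a u b :: real
  assumes "a \<le> u" "u \<le> b"
  shows "u^2 \<le> a^2 + b^2"
proof (cases "u \<ge> 0")
  case True
  then have "u^2 \<le> b^2" using assms by (intro power_mono) auto
  then show ?thesis by (smt (verit) zero_le_power2)
next
  case False
  then have "(-u)^2 \<le> (-a)^2" using assms by (intro power_mono) auto
  then show ?thesis by (smt (verit) zero_le_power2 power2_minus)
qed

lemma chain_less:
  fixes f :: "nat \<Rightarrow> real"
  assumes "\<forall>j\<in>{1..<K}. f j < f (Suc j)" "1 \<le> j" "j < l" "l \<le> K"
  shows "f j < f l"
  using assms(3,4)
proof (induction l)
  case 0 then show ?case by simp
next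
  case (Suc l)
  show ?case
  proof (cases "j = l")
    case True
    then show ?thesis using assms(1,2) Suc.prems by auto
  next
    case False
    then have "f j < f l" using Suc by auto
    moreover have "f l < f (Suc l)" using assms(1,2) Suc.prems False by auto
    ultimately show ?thesis by simp
  qed
qed


theorem lemma11:
  fixes M :: "'a measure" and X :: "nat \<Rightarrow> 'a \<Rightarrow> real^'d"
    and mu beta :: "real^'d" and Cov :: "real^'d^'d"
    and K k :: nat and p :: "nat \<Rightarrow> nat"
  assumes "prob_space M"
    and "K \<ge> 3"
    and "psd_matrix Cov"
    and "\<And>i. i \<in> {1..K} \<Longrightarrow> gaussian_vec M (X i) mu Cov"
    and "prob_space.indep_vars M (\<lambda>_. borel) X {1..K}"
    and "p permutes {1..K}"
    and "k \<in> {2..K-1}"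
  shows "let E = (\<lambda>\<omega>. \<forall>j\<in>{1..<K}. X (p j) \<omega> \<bullet> beta < X (p (Suc j)) \<omega> \<bullet> beta) in
    (\<integral>\<omega>. of_bool (E \<omega>) *\<^sub>R outer (X (p k) \<omega>) \<partial>M)
      \<preceq>\<^sub>L (\<integral>\<omega>. of_bool (E \<omega>) *\<^sub>R outer (X (p 1) \<omega>) \<partial>M)
          + (\<integral>\<omega>. of_bool (E \<omega>) *\<^sub>R outer (X (p K) \<omega>) \<partial>M)"
proof -
  interpret P: prob_space M by fact
  define I where "I = {1..K}"
  have finI: "finite I" by (simp add: I_def)
  define E where "E = (\<lambda>\<omega>. \<forall>j\<in>{1..<K}. X (p j) \<omega> \<bullet> beta < X (p (Suc j)) \<omega> \<bullet> beta)"
  have pI: "p j \<in> I" if "j \<in> I" for j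
    using permutes_in_image[OF assms(6)] that by (simp add: I_def)
  have kk: "1 < k" "k < K" using assms(2,7) by auto
  have gv: "gaussian_vec M (X i) mu Cov" if "i \<in> I" for i using assms(4) that by (simp add: I_def)
  have indep: "P.indep_vars (\<lambda>_. borel) X I" using assms(5) by (simp add: I_def)
  have psd: "psd_matrix Cov" by (rule assms(3))
  have mX: "X i \<in> borel_measurable M" if "i \<in> I" for i using gv[OF that] by (simp add: gaussian_vec_def)
  have Em[measurable]: "Measurable.pred M E"
    unfolding E_def
  proof (intro pred_intros_finite)
    fix j assume j: "j \<in> {1..<K}"
    then have "j \<in> I" "Suc j \<in> I" by (auto simp: I_def)
    then have [measurable]: "X (p j) \<in> borel_measurable M" "X (p (Suc j)) \<in> borel_measurable M"
      using mX pI by auto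
    show "Measurable.pred M (\<lambda>\<omega>. X (p j) \<omega> \<bullet> beta < X (p (Suc j)) \<omega> \<bullet> beta)" by measurable
  qed simp
  define F where "F l \<omega> = of_bool (E \<omega>) *\<^sub>R outer (X l \<omega>)" for l \<omega>
  have sqint: "integrable M (\<lambda>\<omega>. (u \<bullet> X l \<omega>)^2)" if "l \<in> I" for u l
  proof -
    have [measurable]: "X l \<in> borel_measurable M" using mX[OF that] .
    have du: "distr M borel (\<lambda>\<omega>. u \<bullet> X l \<omega>) = normal_measure (u \<bullet> mu) (u \<bullet> (Cov *v u))"
      using gv[OF that] by (simp add: gaussian_vec_def)
    have "0 \<le> u \<bullet> (Cov *v u)" using psd by (simp add: psd_matrix_def)
    from P.normal_rv_moments(2)[OF _ du this] show ?thesis by simp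
  qed
  have intF: "integrable M (F l)" if l: "l \<in> I" for l
  proof -
    have [measurable]: "X l \<in> borel_measurable M" using mX[OF l] .
    have comp: "integrable M (\<lambda>\<omega>. of_bool (E \<omega>) * (X l \<omega> $ i * X l \<omega> $ j))" for i j
    proof -
      have ci: "X l \<omega> $ i = axis i 1 \<bullet> X l \<omega>" for \<omega> i by (simp add: inner_axis')
      have b: "integrable M (\<lambda>\<omega>. (axis i 1 \<bullet> X l \<omega>)^2 + (axis j 1 \<bullet> X l \<omega>)^2)"
        using sqint[OF l] by auto
      show ?thesis
      proof (rule Bochner_Integration.integrable_bound[OF b])
        show "(\<lambda>\<omega>. of_bool (E \<omega>) * (X l \<omega> $ i * X l \<omega> $ j)) \<in> borel_measurable M"
          unfolding ci by measurable
        show "AE \<omega> in M. norm (of_bool (E \<omega>) * (X l \<omega> $ i * X l \<omega> $ j)) \<le> norm ((axis i 1 \<bullet> X l \<omega>)^2 + (axis j 1 \<bullet> X l \<omega>)^2)"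
        proof (rule AE_I2)
          fix \<omega>
          have "\<bar>X l \<omega> $ i * X l \<omega> $ j\<bar> \<le> (X l \<omega> $ i)^2 + (X l \<omega> $ j)^2"
            by (rule abs_prod_sq)
          then show "norm (of_bool (E \<omega>) * (X l \<omega> $ i * X l \<omega> $ j)) \<le> norm ((axis i 1 \<bullet> X l \<omega>)^2 + (axis j 1 \<bullet> X l \<omega>)^2)"
            by (simp add: ci[symmetric])
        qed
      qed
    qed
    have "F l = (\<lambda>\<omega>. \<Sum>i\<in>UNIV. \<Sum>j\<in>UNIV. (of_bool (E \<omega>) * (X l \<omega> $ i * X l \<omega> $ j)) *\<^sub>R axis i (axis j (1::real)))"
      by (rule ext) (simp add: F_def outer_expand scaleR_sum_right)
    then show ?thesis using comp by (auto intro!: integrable_sum integrable_scaleR_left)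
  qed
  have scq: "x \<bullet> ((r *\<^sub>R A) *v x) = r * (x \<bullet> (A *v x))" for x r and A :: "real^'d^'d"
    by (simp add: matrix_vector_mult_def inner_vec_def sum_distrib_left algebra_simps)
  have quad: "x \<bullet> (integral\<^sup>L M (F l) *v x) = (LINT \<omega>|M. of_bool (E \<omega>) * (x \<bullet> X l \<omega>)^2)" if l: "l \<in> I" for x l
    using integral_bounded_linear[OF quad_bl intF[OF l], of x]
    by (simp add: F_def scq quad_outer)
  have symF: "transpose (integral\<^sup>L M (F l)) = integral\<^sup>L M (F l)" if l: "l \<in> I" for l
    by (simp add: vec_eq_iff transpose_def int_entry[OF intF[OF l]] F_def outer_def mult.commute)
  define P where "P = (\<lambda>z::nat \<Rightarrow> real^'d. \<forall>j\<in>{1..<K}. z (p j) \<bullet> beta < z (p (Suc j)) \<bullet> beta)"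
  have Pm: "Measurable.pred (PiM I (\<lambda>_. borel)) P"
    unfolding P_def
  proof (intro pred_intros_finite)
    fix j assume j: "j \<in> {1..<K}"
    then have "p j \<in> I" "p (Suc j) \<in> I" using pI by (auto simp: I_def)
    then have [measurable]: "(\<lambda>z::nat \<Rightarrow> real^'d. z (p j)) \<in> borel_measurable (PiM I (\<lambda>_. borel))"
        "(\<lambda>z::nat \<Rightarrow> real^'d. z (p (Suc j))) \<in> borel_measurable (PiM I (\<lambda>_. borel))"
      by (auto intro: measurable_component_singleton)
    show "Measurable.pred (PiM I (\<lambda>_. borel)) (\<lambda>z::nat \<Rightarrow> real^'d. z (p j) \<bullet> beta < z (p (Suc j)) \<bullet> beta)"
      by measurable
  qed simp
  have sect: "\<exists>B\<in>sets borel. \<forall>y. P (z(i0 := y)) = (beta \<bullet> y \<in> B)" for z :: "nat \<Rightarrow> real^'d" and i0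
  proof -
    define B where "B = {t::real. \<forall>j\<in>{1..<K}. (if p j = i0 then t else z (p j) \<bullet> beta) < (if p (Suc j) = i0 then t else z (p (Suc j)) \<bullet> beta)}"
    have "B \<in> sets borel"
    proof -
      have "Measurable.pred borel (\<lambda>t::real. \<forall>j\<in>{1..<K}. (if p j = i0 then t else z (p j) \<bullet> beta) < (if p (Suc j) = i0 then t else z (p (Suc j)) \<bullet> beta))"
        by (intro pred_intros_finite) auto
      then show ?thesis by (simp add: B_def pred_def)
    qed
    moreover have "\<forall>y. P (z(i0 := y)) = (beta \<bullet> y \<in> B)"
      by (auto simp: P_def B_def inner_commute)
    ultimately show ?thesis by blast
  qed
  have EP: "E \<omega> = P (\<lambda>i\<in>I. X i \<omega>)" for \<omega>
  proof -
    have "j \<in> {1..<K} \<Longrightarrow> p j \<in> I \<and> p (Suc j) \<in> I" for j using pI by (auto simp: I_def)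
    then show ?thesis by (auto simp: E_def P_def)
  qed
  have main: "0 \<le> x \<bullet> ((integral\<^sup>L M (F (p 1)) + integral\<^sup>L M (F (p K)) - integral\<^sup>L M (F (p k))) *v x)" for x
  proof -
    define c where "c = (x \<bullet> (Cov *v beta)) / (beta \<bullet> (Cov *v beta))"
    define w where "w = x - c *\<^sub>R beta"
    define q where "q = (\<lambda>y. (c * y + w \<bullet> mu)^2 + w \<bullet> (Cov *v w))"
    have s0: "0 \<le> w \<bullet> (Cov *v w)" using psd by (simp add: psd_matrix_def)
    define N where "N l = (\<integral>\<^sup>+\<omega>. ennreal (q (beta \<bullet> X l \<omega>) * of_bool (E \<omega>)) \<partial>M)" for l
    have QN: "(LINT \<omega>|M. of_bool (E \<omega>) * (x \<bullet> X l \<omega>)^2) = enn2real (N l)" and Nfin: "N l < \<infinity>"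
      if l: "l \<in> I" for l
    proof -
      have [measurable]: "X l \<in> borel_measurable M" using mX[OF l] .
      have il: "integrable M (\<lambda>\<omega>. of_bool (E \<omega>) * (x \<bullet> X l \<omega>)^2)"
        by (rule Bochner_Integration.integrable_bound[OF sqint[OF l, of x]]) (auto simp: of_bool_def)
      have sw: "(\<integral>\<^sup>+\<omega>. ennreal ((x \<bullet> X l \<omega>)^2 * indicator {z. P z} (\<lambda>i\<in>I. X i \<omega>)) \<partial>M) =
         (\<integral>\<^sup>+\<omega>. ennreal (((c * (beta \<bullet> X l \<omega>) + w \<bullet> mu)^2 + w \<bullet> (Cov *v w)) * indicator {z. P z} (\<lambda>i\<in>I. X i \<omega>)) \<partial>M)"
        by (rule P.swap_cond[OF finI l indep gv psd Pm sect c_def w_def])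
      have "ennreal (LINT \<omega>|M. of_bool (E \<omega>) * (x \<bullet> X l \<omega>)^2) = (\<integral>\<^sup>+\<omega>. ennreal (of_bool (E \<omega>) * (x \<bullet> X l \<omega>)^2) \<partial>M)"
        by (rule nn_integral_eq_integral[OF il, symmetric]) auto
      also have "\<dots> = N l"
        using sw unfolding N_def q_def
        by (simp add: EP indicator_def mult.commute)
      finally have e: "ennreal (LINT \<omega>|M. of_bool (E \<omega>) * (x \<bullet> X l \<omega>)^2) = N l" .
      then show "N l < \<infinity>" by (simp flip: e)
      show "(LINT \<omega>|M. of_bool (E \<omega>) * (x \<bullet> X l \<omega>)^2) = enn2real (N l)"
        using e[symmetric] by (simp add: integral_nonneg_AE)
    qed
    have I1: "p 1 \<in> I" "p k \<in> I" "p K \<in> I" using pI kk by (auto simp: I_def)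
    have Nle: "N (p k) \<le> N (p 1) + N (p K)"
    proof -
      have [measurable]: "X (p 1) \<in> borel_measurable M" "X (p k) \<in> borel_measurable M" "X (p K) \<in> borel_measurable M"
        using mX I1 by auto
      have "N (p k) \<le> (\<integral>\<^sup>+\<omega>. ennreal (q (beta \<bullet> X (p 1) \<omega>) * of_bool (E \<omega>)) + ennreal (q (beta \<bullet> X (p K) \<omega>) * of_bool (E \<omega>)) \<partial>M)"
        unfolding N_def
      proof (rule nn_integral_mono)
        fix \<omega>
        show "ennreal (q (beta \<bullet> X (p k) \<omega>) * of_bool (E \<omega>)) \<le> ennreal (q (beta \<bullet> X (p 1) \<omega>) * of_bool (E \<omega>)) + ennreal (q (beta \<bullet> X (p K) \<omega>) * of_bool (E \<omega>))"
        proof (cases "E \<omega>")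
          case False then show ?thesis by simp
        next
          case True
          let ?f = "\<lambda>j. X (p j) \<omega> \<bullet> beta"
          have ch: "\<forall>j\<in>{1..<K}. ?f j < ?f (Suc j)" using True by (simp add: E_def)
          have lt1: "?f 1 < ?f k" by (rule chain_less[OF ch]) (use kk in auto)
          have lt2: "?f k < ?f K" by (rule chain_less[OF ch]) (use kk in auto)
          have "(c * (beta \<bullet> X (p k) \<omega>) + w \<bullet> mu)^2 \<le> (c * (beta \<bullet> X (p 1) \<omega>) + w \<bullet> mu)^2 + (c * (beta \<bullet> X (p K) \<omega>) + w \<bullet> mu)^2"
          proof (cases "c \<ge> 0")
            case True
            then show ?thesis using lt1 lt2
              by (intro sq_between) (auto simp: inner_commute intro: mult_left_mono)
          next
            case False
            have "(c * (beta \<bullet> X (p k) \<omega>) + w \<bullet> mu)^2 \<le> (c * (beta \<bullet> X (p K) \<omega>) + w \<bullet> mu)^2 + (c * (beta \<bullet> X (p 1) \<omega>) + w \<bullet> mu)^2"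
              using lt1 lt2 False
              by (intro sq_between) (auto simp: inner_commute intro: mult_left_mono_neg)
            then show ?thesis by simp
          qed
          then have "q (beta \<bullet> X (p k) \<omega>) \<le> q (beta \<bullet> X (p 1) \<omega>) + q (beta \<bullet> X (p K) \<omega>)"
            using s0 by (simp add: q_def)
          moreover have "0 \<le> q y" for y using s0 by (simp add: q_def)
          ultimately show ?thesis using True
            by (simp add: ennreal_plus[symmetric] del: ennreal_plus)
        qed
      qed
      also have "\<dots> = N (p 1) + N (p K)"
        unfolding N_def q_def by (rule nn_integral_add) measurable
      finally show ?thesis .
    qed
    have "enn2real (N (p k)) \<le> enn2real (N (p 1)) + enn2real (N (p K))"
    proof -
      have "enn2real (N (p k)) \<le> enn2real (N (p 1) + N (p K))"
        using Nle Nfin I1 by (intro enn2real_mono) (auto simp: ennreal_add_less_top)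
      also have "\<dots> = enn2real (N (p 1)) + enn2real (N (p K))"
        using Nfin I1 by (intro enn2real_plus) auto
      finally show ?thesis .
    qed
    then show ?thesis
      using quad[OF I1(1), of x] quad[OF I1(2), of x] quad[OF I1(3), of x] QN[OF I1(1)] QN[OF I1(2)] QN[OF I1(3)]
      by (simp add: matrix_vector_mult_add_rdistrib matrix_vector_mult_diff_rdistrib inner_add_right inner_diff_right)
  qed
  have "integral\<^sup>L M (F (p k)) \<preceq>\<^sub>L integral\<^sup>L M (F (p 1)) + integral\<^sup>L M (F (p K))"
  proof -
    have I1: "p 1 \<in> I" "p k \<in> I" "p K \<in> I" using pI kk by (auto simp: I_def)
    show ?thesis
      unfolding loewner_le_def psd_matrix_def
      using main symF[OF I1(1)] symF[OF I1(2)] symF[OF I1(3)]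
      by (simp add: tr_adddiff)
  qed
  then show ?thesis unfolding Let_def by (simp only: F_def[abs_def] E_def)
qed

end
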